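(* Let $G$ be a finite non-abelian group satisfying condition (Con). Then the clique number of $\mathcal C_G$ is $\omega(\mathcal C_G)=\max_{u\in G\setminus Z(G)}|C(u)|$. Moreover, with $C(G)=\{v\in G: d(v)-|Z(G)|>0\}$ where $d(v)=|C(v)|-1$ is the degree of $v$ in $\mathcal C_G$: (i) if $C(G)\supsetneq Z(G)$, then $\omega(\mathcal C_G)$ equals the largest eigenvalue of the Laplacian matrix of $\mathcal C_G$ that is strictly smaller than $|G|$ (the second largest distinct eigenvalue); (ii) if $C(G)=Z(G)$, then $\omega(\mathcal C_G)=|Z(G)|+1$.
   Context: For a finite group $G$, the commuting graph $\mathcal C_G$ is the simple undirected graph with vertex set $G$ in which distinct $u,v\in G$ are adjacent iff $uv=vu$. The Laplacian matrix of a simple graph is $L=D-A$ ($A$ adjacency matrix, $D$ diagonal degree matrix). $Z(G)$ is the center of $G$ and $C(v)=\{w\in G: wv=vw\}$ the centralizer of $v$. Condition (Con): for all $u,v\in G\setminus Z(G)$, either $C(u)=C(v)$ or $C(u)\cap C(v)=Z(G)$. The clique number is the maximum size of a set of pairwise adjacent vertices. *)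

theory Defs
  imports "HOL-Algebra.Group" "HOL-Analysis.Analysis"
begin

definition centr :: "('a, 'b) monoid_scheme \<Rightarrow> 'a \<Rightarrow> 'a set" where
  "centr G v = {w \<in> carrier G. w \<otimes>\<^bsub>G\<^esub> v = v \<otimes>\<^bsub>G\<^esub> w}"

definition grp_center :: "('a, 'b) monoid_scheme \<Rightarrow> 'a set" where
  "grp_center G = {z \<in> carrier G. \<forall>w \<in> carrier G. z \<otimes>\<^bsub>G\<^esub> w = w \<otimes>\<^bsub>G\<^esub> z}"

definition con_condition :: "('a, 'b) monoid_scheme \<Rightarrow> bool" where
  "con_condition G \<longleftrightarrow> (\<forall>u \<in> carrier G - grp_center G. \<forall>v \<in> carrier G - grp_center G.
      centr G u = centr G v \<or> centr G u \<inter> centr G v = grp_center G)"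

definition comm_adj :: "('a, 'b) monoid_scheme \<Rightarrow> 'a \<Rightarrow> 'a \<Rightarrow> bool" where
  "comm_adj G u v \<longleftrightarrow> u \<in> carrier G \<and> v \<in> carrier G \<and> u \<noteq> v \<and> u \<otimes>\<^bsub>G\<^esub> v = v \<otimes>\<^bsub>G\<^esub> u"

definition comm_degree :: "('a, 'b) monoid_scheme \<Rightarrow> 'a \<Rightarrow> nat" where
  "comm_degree G u = card {v. comm_adj G u v}"

definition is_clique :: "('a, 'b) monoid_scheme \<Rightarrow> 'a set \<Rightarrow> bool" where
  "is_clique G S \<longleftrightarrow> S \<subseteq> carrier G \<and> (\<forall>u \<in> S. \<forall>v \<in> S. u \<noteq> v \<longrightarrow> comm_adj G u v)"

definition clique_number :: "('a, 'b) monoid_scheme \<Rightarrow> nat" where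
  "clique_number G = Max {card S | S. is_clique G S}"

definition comm_laplacian :: "('a, 'b) monoid_scheme \<Rightarrow> 'a \<Rightarrow> 'a \<Rightarrow> real" where
  "comm_laplacian G u v = (if u = v then real (comm_degree G u) else if comm_adj G u v then -1 else 0)"

definition lap_eigenvalue :: "('a, 'b) monoid_scheme \<Rightarrow> real \<Rightarrow> bool" where
  "lap_eigenvalue G mu \<longleftrightarrow> (\<exists>f :: 'a \<Rightarrow> real. (\<exists>u \<in> carrier G. f u \<noteq> 0) \<and>
      (\<forall>u \<in> carrier G. (\<Sum>v \<in> carrier G. comm_laplacian G u v * f v) = mu * f u))"

text \<open>The set C(G) = {v. d(v) - |Z(G)| > 0}, with d(v) = |C(v)| - 1.\<close>
definition CG_set :: "('a, 'b) monoid_scheme \<Rightarrow> 'a set" where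
  "CG_set G = {v \<in> carrier G. (int (card (centr G v)) - 1) - int (card (grp_center G)) > 0}"

end

theory Submission
  imports Defs
begin

lemma centr_sub: "centr G u \<subseteq> carrier G"
  unfolding centr_def by auto

lemma center_sub: "grp_center G \<subseteq> carrier G"
  unfolding grp_center_def by auto

lemma center_sub_centr: "u \<in> carrier G \<Longrightarrow> grp_center G \<subseteq> centr G u"
  unfolding grp_center_def centr_def by auto

lemma self_in_centr: "u \<in> carrier G \<Longrightarrow> u \<in> centr G u"
  unfolding centr_def by auto

lemma centr_sym: "u \<in> carrier G \<Longrightarrow> v \<in> carrier G \<Longrightarrow> v \<in> centr G u \<longleftrightarrow> u \<in> centr G v"
  unfolding centr_def by auto

lemma centr_central: "u \<in> grp_center G \<Longrightarrow> centr G u = carrier G"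
  unfolding centr_def grp_center_def by auto

lemma noncentral_proper: "u \<in> carrier G - grp_center G \<Longrightarrow> \<exists>w\<in>carrier G. w \<notin> centr G u"
  unfolding centr_def grp_center_def by (auto, metis)

lemma con_eq:
  assumes "con_condition G" "u \<in> carrier G - grp_center G" "v \<in> carrier G - grp_center G"
    "v \<in> centr G u"
  shows "centr G v = centr G u"
proof -
  have "u \<in> centr G v" using assms centr_sym[of u G v] by auto
  moreover have "u \<in> centr G u" using assms self_in_centr by auto
  ultimately have "centr G u \<inter> centr G v \<noteq> grp_center G" using assms(2) by auto
  thus ?thesis using assms(1-3) unfolding con_condition_def by metis
qed

lemma centr_commute:
  assumes "con_condition G" "u \<in> carrier G - grp_center G" "x \<in> centr G u" "y \<in> centr G u"
  shows "x \<otimes>\<^bsub>G\<^esub> y = y \<otimes>\<^bsub>G\<^esub> x"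
proof -
  have xc: "x \<in> carrier G" and yc: "y \<in> carrier G" using assms centr_sub[of G u] by auto
  show ?thesis
  proof (cases "x \<in> grp_center G \<or> y \<in> grp_center G")
    case True
    then show ?thesis using xc yc unfolding grp_center_def by auto
  next
    case False
    then have "centr G x = centr G u" "centr G y = centr G u"
      using con_eq[OF assms(1,2)] xc yc assms by auto
    then have "y \<in> centr G x" using assms by auto
    then show ?thesis unfolding centr_def by auto
  qed
qed

lemma degree_eq:
  assumes "finite (carrier G)" "u \<in> carrier G"
  shows "comm_degree G u = card (centr G u) - 1"
proof -
  have "{v. comm_adj G u v} = centr G u - {u}"
    using assms unfolding comm_adj_def centr_def by auto
  moreover have "finite (centr G u)" using assms centr_sub finite_subset by metis
  ultimately show ?thesis unfolding comm_degree_def using self_in_centr[OF assms(2)] by simp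
qed

lemma lap_sum:
  assumes "finite (carrier G)" "u \<in> carrier G"
  shows "(\<Sum>v \<in> carrier G. comm_laplacian G u v * f v)
     = real (card (centr G u)) * f u - sum f (centr G u)"
proof -
  have fin: "finite (centr G u)" using assms centr_sub finite_subset by metis
  have uc: "u \<in> centr G u" using self_in_centr[OF assms(2)] .
  have pos: "card (centr G u) \<ge> 1" using fin uc
    by (metis One_nat_def Suc_leI card_gt_0_iff empty_iff)
  have "\<And>v. v \<in> carrier G \<Longrightarrow> comm_laplacian G u v * f v =
     (if v = u then real (card (centr G u) - 1) * f u else 0) - (if v \<in> centr G u - {u} then f v else 0)"
    using assms degree_eq[OF assms] unfolding comm_laplacian_def comm_adj_def centr_def by auto
  then have "(\<Sum>v \<in> carrier G. comm_laplacian G u v * f v) =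
     (\<Sum>v \<in> carrier G. (if v = u then real (card (centr G u) - 1) * f u else 0) - (if v \<in> centr G u - {u} then f v else 0))"
    by (rule sum.cong[OF refl])
  also have "\<dots> = real (card (centr G u) - 1) * f u - sum f (centr G u - {u})"
    using assms centr_sub[of G u]
    by (simp add: sum_subtractf sum.If_cases Int_absorb1 Diff_subset order_trans)
       (rule sum.cong, auto)
  also have "sum f (centr G u) = f u + sum f (centr G u - {u})"
    using fin uc by (simp add: sum.remove)
  ultimately show ?thesis using pos by (simp add: of_nat_diff algebra_simps)
qed


lemma eig_cases:
  assumes fin: "finite (carrier G)" and con: "con_condition G"
    and eig: "lap_eigenvalue G mu" and lt: "mu < real (card (carrier G))"
  shows "mu = 0 \<or> mu = real (card (grp_center G)) \<or>
         (\<exists>u \<in> carrier G - grp_center G. mu = real (card (centr G u)))"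
proof (rule ccontr)
  assume nc: "\<not> ?thesis"
  define Z where "Z = grp_center G"
  define D where "D = carrier G - Z"
  define N where "N = real (card (carrier G))"
  define z where "z = real (card Z)"
  have Zs: "Z \<subseteq> carrier G" unfolding Z_def by (rule center_sub)
  have finZ: "finite Z" using fin Zs finite_subset by metis
  have finD: "finite D" using fin unfolding D_def by auto
  have mu0: "mu \<noteq> 0" and muz: "mu \<noteq> z" and mus: "\<And>u. u \<in> D \<Longrightarrow> mu \<noteq> real (card (centr G u))"
    using nc unfolding z_def Z_def D_def by auto
  obtain f where fnz: "\<exists>u \<in> carrier G. f u \<noteq> 0" and
    feq: "\<And>u. u \<in> carrier G \<Longrightarrow> real (card (centr G u)) * f u - sum f (centr G u) = mu * f u"
    using eig lap_sum[OF fin] unfolding lap_eigenvalue_def by metis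
  define S where "S = sum f (carrier G)"
  define c where "c = S / (N - mu)"
  have Nmu: "N - mu \<noteq> 0" using lt unfolding N_def by auto
  have fc: "f u = c" if "u \<in> Z" for u
  proof -
    have uc: "u \<in> carrier G" using that Zs by auto
    have "N * f u - S = mu * f u" using feq[OF uc] centr_central[of u G] that
      unfolding Z_def N_def S_def by simp
    then have "(N - mu) * f u = S" by (simp add: algebra_simps)
    then show ?thesis unfolding c_def using Nmu by (simp add: field_simps)
  qed
  define a where "a = z * c / (z - mu)"
  have zmu: "z - mu \<noteq> 0" using muz by auto
  have fa: "f u = a" if uD: "u \<in> D" for u
  proof -
    have uc: "u \<in> carrier G" using uD unfolding D_def by auto
    let ?s = "real (card (centr G u))"
    have finC: "finite (centr G u)" using fin centr_sub finite_subset by metis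
    have ZC: "Z \<subseteq> centr G u" unfolding Z_def using center_sub_centr[OF uc] .
    have same: "f v = f u" if vin: "v \<in> centr G u - Z" for v
    proof -
      have vD: "v \<in> carrier G - grp_center G" using vin centr_sub[of G u] unfolding Z_def by auto
      have ce: "centr G v = centr G u"
        using con_eq[OF con _ vD] uD vin unfolding D_def Z_def by auto
      have vc: "v \<in> carrier G" using vD by auto
      have "?s * f v - sum f (centr G u) = mu * f v" using feq[OF vc] ce by simp
      moreover have "?s * f u - sum f (centr G u) = mu * f u" using feq[OF uc] .
      ultimately have "(?s - mu) * (f v - f u) = 0" by (simp add: algebra_simps)
      moreover have "?s - mu \<noteq> 0" using mus[OF uD] by auto
      ultimately show ?thesis by simp
    qed
    have "sum f (centr G u) = sum f Z + sum f (centr G u - Z)"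
      using finC ZC by (metis add.commute sum.subset_diff)
    also have "sum f Z = z * c" using fc unfolding z_def by simp
    also have "sum f (centr G u - Z) = real (card (centr G u - Z)) * f u"
      using same by simp
    also have "real (card (centr G u - Z)) = ?s - z"
      using ZC finZ unfolding z_def by (simp add: card_Diff_subset of_nat_diff card_mono finC)
    finally have "sum f (centr G u) = z * c + (?s - z) * f u" .
    with feq[OF uc] have "(z - mu) * f u = z * c" by (simp add: algebra_simps)
    then show ?thesis unfolding a_def using zmu by (simp add: field_simps)
  qed
  have "S = sum f Z + sum f D"
    unfolding S_def D_def using fin Zs by (metis add.commute sum.subset_diff)
  also have "sum f Z = z * c" using fc unfolding z_def by simp
  also have "sum f D = (N - z) * a"
    using fa Zs finZ unfolding D_def N_def z_def by (simp add: card_Diff_subset of_nat_diff card_mono fin)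
  finally have Seq: "S = z * c + (N - z) * a" .
  have Sc: "S = (N - mu) * c" unfolding c_def using Nmu by simp
  show False
  proof (cases "c = 0")
    case True
    then have "a = 0" unfolding a_def by simp
    then have "\<forall>u \<in> carrier G. f u = 0" using fa fc True unfolding D_def by blast
    then show False using fnz by auto
  next
    case False
    have "(N - mu) * c = z * c + (N - z) * (z * c / (z - mu))" using Seq Sc unfolding a_def by simp
    then have "(N - mu) * c * (z - mu) = z * c * (z - mu) + (N - z) * (z * c)"
      using zmu by (simp add: field_simps)
    then have "c * (mu * (mu - N)) = 0" by (simp add: algebra_simps)
    then have "mu = N" using False mu0 by simp
    then show False using lt unfolding N_def by simp
  qed
qed


theorem proposition3p1:
  fixes G :: "('a, 'b) monoid_scheme"
  assumes "group G" and "finite (carrier G)" and "\<not> comm_group G"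
    and "con_condition G"
  shows "clique_number G = Max ((\<lambda>u. card (centr G u)) ` (carrier G - grp_center G))
    \<and> (grp_center G \<subset> CG_set G \<longrightarrow>
           real (clique_number G) = Max {mu. lap_eigenvalue G mu \<and> mu < real (card (carrier G))})
    \<and> (CG_set G = grp_center G \<longrightarrow> clique_number G = card (grp_center G) + 1)"
proof -
  note fin = assms(2) and con = assms(4)
  define Z where "Z = grp_center G"
  define D where "D = carrier G - Z"
  define M where "M = Max ((\<lambda>u. card (centr G u)) ` D)"
  have Zs: "Z \<subseteq> carrier G" unfolding Z_def by (rule center_sub)
  have finZ: "finite Z" using fin Zs finite_subset by metis
  have finD: "finite D" using fin unfolding D_def by auto
  have finC: "\<And>u. finite (centr G u)" using fin centr_sub finite_subset by metis
  have "\<exists>x\<in>carrier G. \<exists>y\<in>carrier G. x \<otimes>\<^bsub>G\<^esub> y \<noteq> y \<otimes>\<^bsub>G\<^esub> x"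
    using assms(1,3) group.group_comm_groupI[OF assms(1)] by metis
  then obtain x0 where "x0 \<in> carrier G" "x0 \<notin> Z" unfolding Z_def grp_center_def by blast
  then have Dne: "D \<noteq> {}" unfolding D_def by auto
  have leM: "\<And>u. u \<in> D \<Longrightarrow> card (centr G u) \<le> M"
    unfolding M_def using finD by auto
  obtain u0 where u0D: "u0 \<in> D" and u0M: "card (centr G u0) = M"
    unfolding M_def using finD Dne
    by (metis (no_types, lifting) Max_in finite_imageI image_iff image_is_empty)
  have u0c: "u0 \<in> carrier G" using u0D unfolding D_def by auto
  have ZC: "\<And>u. u \<in> carrier G \<Longrightarrow> Z \<subseteq> centr G u" unfolding Z_def using center_sub_centr by metis
  have zM: "card Z \<le> M" using ZC[OF u0c] finC u0M card_mono by metis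
  have ge: "card Z + 1 \<le> card (centr G u)" if "u \<in> D" for u
  proof -
    have uc: "u \<in> carrier G" and uZ: "u \<notin> Z" using that unfolding D_def by auto
    have "insert u Z \<subseteq> centr G u" using ZC[OF uc] self_in_centr[OF uc] by auto
    then have "card (insert u Z) \<le> card (centr G u)" using finC card_mono by metis
    then show ?thesis using uZ finZ by simp
  qed
  have u0D': "u0 \<in> carrier G - grp_center G" using u0D unfolding D_def Z_def .
  have P1: "clique_number G = M"
    unfolding clique_number_def
  proof (rule Max_eqI)
    have "{card S |S. is_clique G S} \<subseteq> card ` Pow (carrier G)"
      unfolding is_clique_def by auto
    then show "finite {card S |S. is_clique G S}" using fin finite_subset by blast
  next
    fix y assume "y \<in> {card S |S. is_clique G S}"
    then obtain S where cl: "is_clique G S" and yS: "y = card S" by auto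
    have Ss: "S \<subseteq> carrier G" using cl unfolding is_clique_def by auto
    show "y \<le> M"
    proof (cases "S \<subseteq> Z")
      case True
      then have "card S \<le> card Z" using finZ card_mono by metis
      then show ?thesis using yS zM by linarith
    next
      case False
      then obtain u where uS: "u \<in> S" and uZ: "u \<notin> Z" by auto
      have uc: "u \<in> carrier G" using uS Ss by auto
      have "S \<subseteq> centr G u"
      proof
        fix v assume vS: "v \<in> S"
        show "v \<in> centr G u"
        proof (cases "v = u")
          case True then show ?thesis using self_in_centr[OF uc] by simp
        next
          case False
          then have "comm_adj G u v" using cl uS vS unfolding is_clique_def by auto
          then show ?thesis unfolding comm_adj_def centr_def by auto
        qed
      qed
      then have "card S \<le> card (centr G u)" using finC card_mono by metis
      moreover have "u \<in> D" using uc uZ unfolding D_def by auto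
      ultimately show ?thesis using leM[of u] yS by linarith
    qed
  next
    have "is_clique G (centr G u0)"
      unfolding is_clique_def comm_adj_def
      using centr_sub[of G u0] centr_commute[OF con u0D'] by auto
    then show "M \<in> {card S |S. is_clique G S}" using u0M by auto
  qed
  have P2: "real (clique_number G) = Max {mu. lap_eigenvalue G mu \<and> mu < real (card (carrier G))}"
    if sub: "grp_center G \<subset> CG_set G"
  proof -
    obtain v where vCG: "v \<in> CG_set G" and vZ: "v \<notin> Z" using sub unfolding Z_def by auto
    have vD: "v \<in> D" and big: "card (centr G v) \<ge> card Z + 2"
      using vCG vZ unfolding CG_set_def D_def Z_def by auto
    have M2: "M \<ge> card Z + 2" using leM[OF vD] big by simp
    have "card (centr G u0 - Z) = M - card Z"
      using ZC[OF u0c] finZ u0M by (simp add: card_Diff_subset)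
    then have c2: "card (centr G u0 - Z) \<ge> 2" using M2 by simp
    obtain x where xA: "x \<in> centr G u0 - Z"
      using c2 by (metis card.empty all_not_in_conv not_numeral_le_zero)
    have "card (centr G u0 - Z - {x}) \<ge> 1" using c2 xA finC by simp
    then obtain y where yA: "y \<in> centr G u0 - Z - {x}"
      by (metis card.empty all_not_in_conv not_one_le_zero)
    have xD: "x \<in> carrier G - grp_center G" and yD: "y \<in> carrier G - grp_center G"
      using xA yA centr_sub[of G u0] unfolding Z_def by auto
    have xy: "x \<noteq> y" using yA by auto
    have cx: "centr G x = centr G u0" using con_eq[OF con u0D' xD] xA by auto
    have cy: "centr G y = centr G u0" using con_eq[OF con u0D' yD] yA by auto
    define f :: "'a \<Rightarrow> real" where "f v = (if v = x then 1 else 0) + (if v = y then -1 else 0)" for v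
    have sumf: "sum f A = (if x \<in> A then 1 else 0) + (if y \<in> A then -1 else 0)" if "finite A" for A
      unfolding f_def using that by (simp add: sum.distrib)
    have Mev: "lap_eigenvalue G (real M)"
      unfolding lap_eigenvalue_def
    proof (rule exI[of _ f], intro conjI ballI)
      show "\<exists>u \<in> carrier G. f u \<noteq> 0" using xD xy by (auto simp: f_def)
    next
      fix u assume uc: "u \<in> carrier G"
      have "real (card (centr G u)) * f u - sum f (centr G u) = real M * f u"
      proof (cases "u \<in> Z")
        case True
        then have "centr G u = carrier G" using centr_central unfolding Z_def by metis
        moreover have "f u = 0" using True xD yD unfolding f_def Z_def by auto
        ultimately show ?thesis using sumf[OF fin] xD yD xy by simp
      next
        case False
        then have uD': "u \<in> carrier G - grp_center G" using uc unfolding Z_def by auto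
        show ?thesis
        proof (cases "x \<in> centr G u \<or> y \<in> centr G u")
          case True
          then have "centr G u = centr G u0"
            using con_eq[OF con uD' xD] con_eq[OF con uD' yD] cx cy by auto
          then show ?thesis using sumf[OF finC] xA yA xy u0M by simp
        next
          case False
          then have "u \<noteq> x" "u \<noteq> y" using self_in_centr[OF uc] by auto
          then have "f u = 0" unfolding f_def by simp
          then show ?thesis using sumf[OF finC] False by simp
        qed
      qed
      then show "(\<Sum>v\<in>carrier G. comm_laplacian G u v * f v) = real M * f u"
        using lap_sum[OF fin uc] by simp
    qed
    have Mlt: "real M < real (card (carrier G))"
    proof -
      obtain w where "w \<in> carrier G" "w \<notin> centr G u0" using noncentral_proper[OF u0D'] by auto
      then have "centr G u0 \<subset> carrier G" using centr_sub[of G u0] by auto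
      then have "card (centr G u0) < card (carrier G)" using fin psubset_card_mono by metis
      then show ?thesis using u0M by simp
    qed
    let ?E = "{mu. lap_eigenvalue G mu \<and> mu < real (card (carrier G))}"
    have Esub: "?E \<subseteq> {0, real (card Z)} \<union> (\<lambda>u. real (card (centr G u))) ` D"
    proof
      fix mu assume "mu \<in> ?E"
      then have "mu = 0 \<or> mu = real (card Z) \<or> (\<exists>u \<in> D. mu = real (card (centr G u)))"
        using eig_cases[OF fin con, of mu] unfolding Z_def D_def by blast
      then show "mu \<in> {0, real (card Z)} \<union> (\<lambda>u. real (card (centr G u))) ` D" by blast
    qed
    have "Max ?E = real M"
    proof (rule Max_eqI)
      show "finite ?E" using Esub finD finite_subset by blast
    next
      fix mu assume "mu \<in> ?E"
      then have "mu \<in> {0, real (card Z)} \<union> (\<lambda>u. real (card (centr G u))) ` D" using Esub by blast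
      then show "mu \<le> real M" using zM leM by auto
    next
      show "real M \<in> ?E" using Mev Mlt by simp
    qed
    then show ?thesis using P1 by simp
  qed
  have P3: "clique_number G = card (grp_center G) + 1" if eq: "CG_set G = grp_center G"
  proof -
    have "u0 \<notin> CG_set G" using eq u0D unfolding D_def Z_def by auto
    then have "M \<le> card Z + 1" using u0c u0M unfolding CG_set_def Z_def by auto
    then show ?thesis using P1 ge[OF u0D] u0M unfolding Z_def by simp
  qed
  show ?thesis using P1 P2 P3 unfolding M_def D_def Z_def by blast
qed

end
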